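(* Let $T$ be a rooted binary phylogenetic $X$-tree with $|X|\geq 3$ and strictly positive edge lengths, and let $X'\subset X$ be such that the ranking $\pi_T$ is strict and reversible with respect to $X'$ (with induced subtree $\widetilde{T}=T_{\widetilde X}$, $\widetilde{X}=X\setminus X'$). Then for every cherry $[x_i,x_j]$ of $T$ we have $|X'\cap\{x_i,x_j\}|\geq 1$, i.e. at least one leaf of every cherry is deleted.
   Context: A rooted binary phylogenetic $X$-tree ($X$ a finite nonempty set, $|X|=n$) is a rooted tree whose root $\rho$ has in-degree 0 and out-degree 2, all edges directed away from $\rho$, all other interior vertices have in-degree 1 and out-degree 2, and whose leaves are bijectively labelled by $X$ (for $|X|=1$ the tree may be a single vertex). Every edge $e$ has a strictly positive length $\lambda_e$. The Fair Proportion index of $x\in X$ is $FP_T(x)=\sum_{e\in P(T;\rho,x)}\lambda_e/D_e$, where $P(T;\rho,x)$ is the path from $\rho$ to $x$ and $D_e$ is the number of leaves descended from $e$. A cherry is a pair of leaves with the same parent. For $Y\subseteq X$, the induced subtree $T_Y$ is obtained from the minimal subtree of $T$ connecting $Y$ by suppressing all non-root vertices of in- and out-degree 1, adding the lengths of merged edges; if the root then has out-degree 1, it and its incident edge are deleted. The ranking $\pi_T$ orders $X$ by decreasing $FP_T$; it is strict if all values $FP_T(x)$, $x\in X$, are pairwise distinct. For $X'\subset X$, $\widetilde X=X\setminus X'$ and $\widetilde T=T_{\widetilde X}$, a strict ranking $\pi_T$ is reversible with respect to $X'$ if for all distinct $x_i,x_j\in\widetilde X$, $FP_T(x_i)>FP_T(x_j)$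 implies $FP_{\widetilde T}(x_i)<FP_{\widetilde T}(x_j)$. *)

theory Defs
  imports Complex_Main
begin

text \<open>Leaf x is a leaf labelled x (also the one-vertex tree);
  Node l a r b is an interior vertex with left child subtree l reached by an
  edge of length a and right child subtree r reached by an edge of length b.\<close>

datatype 'a ptree = Leaf 'a | Node "'a ptree" real "'a ptree" real

primrec leaf_list :: "'a ptree \<Rightarrow> 'a list" where
  "leaf_list (Leaf x) = [x]"
| "leaf_list (Node l a r b) = leaf_list l @ leaf_list r"

definition leaves :: "'a ptree \<Rightarrow> 'a set" where
  "leaves t = set (leaf_list t)"

primrec pos_lengths :: "'a ptree \<Rightarrow> bool" where
  "pos_lengths (Leaf x) = True"
| "pos_lengths (Node l a r b) = (a > 0 \<and> b > 0 \<and> pos_lengths l \<and> pos_lengths r)"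

definition phylo_tree :: "'a ptree \<Rightarrow> bool" where
  "phylo_tree t \<longleftrightarrow> distinct (leaf_list t) \<and> pos_lengths t"

text \<open>Fair Proportion index: sum over edges e on the root-to-x path of
  length(e) / (number of leaves below e).\<close>
primrec FP :: "'a ptree \<Rightarrow> 'a \<Rightarrow> real" where
  "FP (Leaf y) x = 0"
| "FP (Node l a r b) x =
     (if x \<in> leaves l then a / real (card (leaves l)) + FP l x
      else if x \<in> leaves r then b / real (card (leaves r)) + FP r x
      else 0)"

primrec is_cherry :: "'a ptree \<Rightarrow> 'a \<Rightarrow> 'a \<Rightarrow> bool" where
  "is_cherry (Leaf z) x y = False"
| "is_cherry (Node l a r b) x y =
     ((l = Leaf x \<and> r = Leaf y) \<or> (l = Leaf y \<and> r = Leaf x)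
      \<or> is_cherry l x y \<or> is_cherry r x y)"

text \<open>Restriction to a leaf set Y: returns the pruned subtree (with all
  degree-2 vertices suppressed, merged edge lengths added) together with the
  accumulated length of the path from the root of t down to the root of the
  pruned subtree; None if no leaf of Y lies in t.\<close>
primrec restr :: "'a set \<Rightarrow> 'a ptree \<Rightarrow> ('a ptree \<times> real) option" where
  "restr Y (Leaf x) = (if x \<in> Y then Some (Leaf x, 0) else None)"
| "restr Y (Node l a r b) =
     (case (restr Y l, restr Y r) of
        (None, None) \<Rightarrow> None
      | (Some (l', c), None) \<Rightarrow> Some (l', a + c)
      | (None, Some (r', d)) \<Rightarrow> Some (r', b + d)
      | (Some (l', c), Some (r', d)) \<Rightarrow> Some (Node l' (a + c) r' (b + d), 0))"

text \<open>Induced subtree T_Y (the edge above the new root, if any, is deleted).\<close>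
definition induced :: "'a ptree \<Rightarrow> 'a set \<Rightarrow> 'a ptree" where
  "induced t Y = fst (the (restr Y t))"

definition strict_ranking :: "'a ptree \<Rightarrow> bool" where
  "strict_ranking t \<longleftrightarrow> inj_on (FP t) (leaves t)"

definition reversible :: "'a ptree \<Rightarrow> 'a set \<Rightarrow> bool" where
  "reversible t X' \<longleftrightarrow> strict_ranking t \<and>
     (let Xt = leaves t - X'; Tt = induced t Xt in
      \<forall>xi \<in> Xt. \<forall>xj \<in> Xt. xi \<noteq> xj \<longrightarrow> FP t xi > FP t xj \<longrightarrow> FP Tt xi < FP Tt xj)"

end

theory Submission
  imports Defs
begin

primrec subt :: "'a ptree \<Rightarrow> 'a ptree \<Rightarrow> bool" where
  "subt s (Leaf z) = (s = Leaf z)"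
| "subt s (Node l a r b) = (s = Node l a r b \<or> subt s l \<or> subt s r)"

lemma subt_leaves: "subt s t \<Longrightarrow> set (leaf_list s) \<subseteq> set (leaf_list t)"
  by (induction t) auto

lemma cherry_subt: "is_cherry t x y \<Longrightarrow> \<exists>a b. subt (Node (Leaf x) a (Leaf y) b) t \<or> subt (Node (Leaf y) a (Leaf x) b) t"
  by (induction t) fastforce+

lemma FP_subt:
  "subt (Node (Leaf x) a (Leaf y) b) t \<Longrightarrow> distinct (leaf_list t) \<Longrightarrow> FP t x - a = FP t y - b"
proof (induction t)
  case (Leaf z)
  then show ?case by simp
next
  case (Node l a' r b')
  let ?s = "Node (Leaf x) a (Leaf y) b"
  from Node.prems(1) consider "?s = Node l a' r b'" | "subt ?s l" | "subt ?s r" by auto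
  then show ?case
  proof cases
    case 1
    then have "x \<noteq> y" using Node.prems(2) by auto
    with 1 show ?thesis by (auto simp: leaves_def)
  next
    case 2
    have "x \<in> leaves l" "y \<in> leaves l" using subt_leaves[OF 2] by (auto simp: leaves_def)
    moreover have "FP l x - a = FP l y - b" using Node.IH(1)[OF 2] Node.prems(2) by simp
    ultimately show ?thesis by simp
  next
    case 3
    have "x \<in> leaves r" "y \<in> leaves r" using subt_leaves[OF 3] by (auto simp: leaves_def)
    moreover have "x \<notin> leaves l" "y \<notin> leaves l" using calculation Node.prems(2) by (auto simp: leaves_def)
    moreover have "FP r x - a = FP r y - b" using Node.IH(2)[OF 3] Node.prems(2) by simp
    ultimately show ?thesis by simp
  qed
qed

lemma restr_None: "restr Y t = None \<longleftrightarrow> set (leaf_list t) \<inter> Y = {}"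
  by (induction t) (auto split: option.splits)

lemma restr_list: "restr Y t = Some (t', c) \<Longrightarrow> leaf_list t' = filter (\<lambda>z. z \<in> Y) (leaf_list t)"
  by (induction t arbitrary: t' c) (auto split: option.splits if_splits simp: restr_None filter_empty_conv)

lemma subt_neq: "subt (Node (Leaf u) a (Leaf v) b) t \<Longrightarrow> distinct (leaf_list t) \<Longrightarrow> u \<noteq> v"
proof (induction t)
  case (Leaf z) then show ?case by simp
next
  case (Node l a' r b')
  show ?case
  proof (cases "Node (Leaf u) a (Leaf v) b = Node l a' r b'")
    case True then show ?thesis using Node.prems(2) by auto
  next
    case False
    then have "subt (Node (Leaf u) a (Leaf v) b) l \<or> subt (Node (Leaf u) a (Leaf v) b) r" using Node.prems(1) by auto
    then show ?thesis using Node.IH Node.prems(2) by auto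
  qed
qed

lemma restr_subt:
  "restr Y t = Some (t', c) \<Longrightarrow> subt s t \<Longrightarrow> set (leaf_list s) \<subseteq> Y \<Longrightarrow> s = Node (Leaf x) a (Leaf y) b \<Longrightarrow> subt s t'"
proof (induction t arbitrary: t' c)
  case (Leaf z)
  then show ?case by simp
next
  case (Node l a' r b')
  from Node.prems(2) consider "s = Node l a' r b'" | "subt s l" | "subt s r" by auto
  then show ?case
  proof cases
    case 1
    then show ?thesis using Node.prems by auto
  next
    case 2
    have ne: "restr Y l \<noteq> None" using subt_leaves[OF 2] Node.prems(3,4) restr_None by fastforce
    then obtain l' c' where L: "restr Y l = Some (l', c')" by auto
    have "subt s l'" using Node.IH(1)[OF L 2 Node.prems(3,4)] .
    then show ?thesis using Node.prems(1) L by (auto split: option.splits)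
  next
    case 3
    have ne: "restr Y r \<noteq> None" using subt_leaves[OF 3] Node.prems(3,4) restr_None by fastforce
    then obtain r' c' where R: "restr Y r = Some (r', c')" by auto
    have "subt s r'" using Node.IH(2)[OF R 3 Node.prems(3,4)] .
    then show ?thesis using Node.prems(1) R by (auto split: option.splits)
  qed
qed

lemma core:
  assumes "phylo_tree T" "strict_ranking T" "reversible T X'"
    and S: "subt (Node (Leaf u) a (Leaf v) b) T" and "u \<notin> X'" "v \<notin> X'"
  shows False
proof -
  have dT: "distinct (leaf_list T)" using assms(1) by (simp add: phylo_tree_def)
  have uv: "u \<in> leaves T" "v \<in> leaves T" using subt_leaves[OF S] by (auto simp: leaves_def)
  have "u \<noteq> v" using subt_neq[OF S dT] .
  define Y where "Y = leaves T - X'"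
  have "u \<in> set (leaf_list T) \<inter> Y" using uv assms(5) unfolding Y_def leaves_def by auto
  then have "restr Y T \<noteq> None" unfolding restr_None by blast
  then obtain t' c where R: "restr Y T = Some (t', c)" by auto
  have Tt: "induced T Y = t'" using R by (simp add: induced_def)
  have dt': "distinct (leaf_list t')" using restr_list[OF R] dT by simp
  have st: "subt (Node (Leaf u) a (Leaf v) b) t'"
    using restr_subt[OF R S] uv assms(5,6) unfolding Y_def by auto
  have e1: "FP T u - a = FP T v - b" using FP_subt[OF S dT] .
  have e2: "FP t' u - a = FP t' v - b" using FP_subt[OF st dt'] .
  have ne: "FP T u \<noteq> FP T v" using assms(2) uv \<open>u \<noteq> v\<close>
    by (auto simp: strict_ranking_def inj_on_def)
  have rev: "\<forall>xi\<in>Y. \<forall>xj\<in>Y. xi \<noteq> xj \<longrightarrow> FP T xi > FP T xj \<longrightarrow> FP t' xi < FP t' xj"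
    using assms(3) Tt unfolding reversible_def Y_def Let_def by simp
  have "u \<in> Y" "v \<in> Y" using uv assms(5,6) Y_def by auto
  note Y = this
  show False
  proof (cases "FP T u > FP T v")
    case True
    then have "FP t' u < FP t' v" using rev Y \<open>u \<noteq> v\<close> by blast
    then show False using True e1 e2 by linarith
  next
    case False
    then have "FP T v > FP T u" using ne by linarith
    moreover have "v \<noteq> u" using \<open>u \<noteq> v\<close> by simp
    ultimately have "FP t' v < FP t' u" using rev Y by blast
    then show False using \<open>FP T v > FP T u\<close> e1 e2 by linarith
  qed
qed

theorem theorem1:
  fixes T :: "'a ptree" and X' :: "'a set"
  assumes "phylo_tree T"
    and "card (leaves T) \<ge> 3"
    and "X' \<subset> leaves T"
    and "strict_ranking T"
    and "reversible T X'"
  shows "\<forall>xi xj. is_cherry T xi xj \<longrightarrow> card (X' \<inter> {xi, xj}) \<ge> 1"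
proof (intro allI impI)
  fix xi xj assume c: "is_cherry T xi xj"
  show "card (X' \<inter> {xi, xj}) \<ge> 1"
  proof (rule ccontr)
    assume "\<not> ?thesis"
    then have "card (X' \<inter> {xi, xj}) = 0" by linarith
    then have "X' \<inter> {xi, xj} = {}" by (simp add: card_0_eq)
    then have n: "xi \<notin> X'" "xj \<notin> X'" by auto
    from cherry_subt[OF c] obtain a b where
      "subt (Node (Leaf xi) a (Leaf xj) b) T \<or> subt (Node (Leaf xj) a (Leaf xi) b) T" by blast
    then show False using core[OF assms(1,4,5)] n by blast
  qed
qed

end
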